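(* Let $R$ be a reduced ring and $n\ge 1$. Then the ring $$S=\left\{\begin{pmatrix} a & a_{12} & \cdots & a_{1n}\\ 0 & a & \cdots & a_{2n}\\ \vdots & \vdots & \ddots & \vdots\\ 0&0&\cdots & a\end{pmatrix} : a, a_{ij}\in R\right\}$$ of upper triangular $n\times n$ matrices over $R$ with constant diagonal is almost Armendariz.
   Context: All rings are associative with identity. A ring is reduced if it has no nonzero nilpotent elements. For a ring $R$, $P(R)$ denotes the prime radical of $R$ (the intersection of all prime ideals of $R$, equivalently the set of strongly nilpotent elements of $R$). A ring $R$ is called almost Armendariz if whenever $f(x)=\sum_{i=0}^m a_ix^i$ and $g(x)=\sum_{j=0}^n b_jx^j\in R[x]$ satisfy $f(x)g(x)=0$, then $a_ib_j\in P(R)$ for all $0\le i\le m$, $0\le j\le n$. *)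

theory Defs
  imports "HOL-Algebra.Algebra"
begin

definition reduced_ring :: "('a, 'b) ring_scheme \<Rightarrow> bool" where
  "reduced_ring R \<longleftrightarrow>
     (\<forall>x \<in> carrier R. \<forall>k::nat. x [^]\<^bsub>R\<^esub> k = \<zero>\<^bsub>R\<^esub> \<longrightarrow> x = \<zero>\<^bsub>R\<^esub>)"

definition nc_prime_ideal :: "'a set \<Rightarrow> ('a, 'b) ring_scheme \<Rightarrow> bool" where
  "nc_prime_ideal P R \<longleftrightarrow> ideal P R \<and> P \<noteq> carrier R \<and>
     (\<forall>A B. ideal A R \<longrightarrow> ideal B R \<longrightarrow>
        (\<forall>a \<in> A. \<forall>b \<in> B. a \<otimes>\<^bsub>R\<^esub> b \<in> P) \<longrightarrow> A \<subseteq> P \<or> B \<subseteq> P)"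

definition prime_radical :: "('a, 'b) ring_scheme \<Rightarrow> 'a set" where
  "prime_radical R = {x \<in> carrier R. \<forall>P. nc_prime_ideal P R \<longrightarrow> x \<in> P}"

definition almost_armendariz :: "('a, 'b) ring_scheme \<Rightarrow> bool" where
  "almost_armendariz R \<longleftrightarrow>
     (\<forall>f \<in> carrier (UP R). \<forall>g \<in> carrier (UP R).
        f \<otimes>\<^bsub>UP R\<^esub> g = \<zero>\<^bsub>UP R\<^esub> \<longrightarrow>
        (\<forall>i j. coeff (UP R) f i \<otimes>\<^bsub>R\<^esub> coeff (UP R) g j \<in> prime_radical R))"

definition const_diag_tri_ring :: "('a, 'b) ring_scheme \<Rightarrow> nat \<Rightarrow> (nat \<Rightarrow> nat \<Rightarrow> 'a) ring" where
  "const_diag_tri_ring R n = \<lparr>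
     carrier = {A. (\<forall>i j. (n \<le> i \<or> n \<le> j) \<longrightarrow> A i j = \<zero>\<^bsub>R\<^esub>)
                 \<and> (\<forall>i<n. \<forall>j<n. A i j \<in> carrier R)
                 \<and> (\<forall>i<n. \<forall>j<i. A i j = \<zero>\<^bsub>R\<^esub>)
                 \<and> (\<forall>i<n. A i i = A 0 0)},
     monoid.mult = (\<lambda>A B i j. if i < n \<and> j < n
                        then (\<Oplus>\<^bsub>R\<^esub> k \<in> {..<n}. A i k \<otimes>\<^bsub>R\<^esub> B k j)
                        else \<zero>\<^bsub>R\<^esub>),
     monoid.one = (\<lambda>i j. if i < n \<and> i = j then \<one>\<^bsub>R\<^esub> else \<zero>\<^bsub>R\<^esub>),
     ring.zero = (\<lambda>i j. \<zero>\<^bsub>R\<^esub>),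
     ring.add = (\<lambda>A B i j. if i < n \<and> j < n then A i j \<oplus>\<^bsub>R\<^esub> B i j else \<zero>\<^bsub>R\<^esub>) \<rparr>"

end

theory Submission
  imports Defs
begin


lemma red_sq:
  fixes R (structure)
  assumes "ring R" "reduced_ring R" "x \<in> carrier R" "x \<otimes>\<^bsub>R\<^esub> x = \<zero>\<^bsub>R\<^esub>"
  shows "x = \<zero>\<^bsub>R\<^esub>"
proof -
  interpret ring R by fact
  have "x [^] (2::nat) = x \<otimes> x" using assms(3) by (simp add: numeral_2_eq_2)
  thus ?thesis using assms unfolding reduced_ring_def by metis
qed

context
  fixes R (structure)
  assumes Rr: "ring R" and Rred: "reduced_ring R"
begin

interpretation ring R by (rule Rr)

lemma red_comm: "x \<in> carrier R \<Longrightarrow> y \<in> carrier R \<Longrightarrow> x \<otimes> y = \<zero> \<Longrightarrow> y \<otimes> x = \<zero>"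
proof -
  assume c: "x \<in> carrier R" "y \<in> carrier R" and e: "x \<otimes> y = \<zero>"
  have "(y \<otimes> x) \<otimes> (y \<otimes> x) = y \<otimes> (x \<otimes> y) \<otimes> x" using c by (simp add: m_assoc)
  also have "\<dots> = \<zero>" using c e by simp
  finally show ?thesis using red_sq[OF Rr Rred, of "y \<otimes> x"] c by simp
qed

lemma red_mid: "x \<in> carrier R \<Longrightarrow> y \<in> carrier R \<Longrightarrow> r \<in> carrier R \<Longrightarrow> x \<otimes> y = \<zero> \<Longrightarrow> x \<otimes> r \<otimes> y = \<zero>"
proof -
  assume c: "x \<in> carrier R" "y \<in> carrier R" "r \<in> carrier R" and e: "x \<otimes> y = \<zero>"
  have yx: "y \<otimes> x = \<zero>" using red_comm c e by blast
  have "(x \<otimes> r \<otimes> y) \<otimes> (x \<otimes> r \<otimes> y) = x \<otimes> r \<otimes> (y \<otimes> x) \<otimes> r \<otimes> y" using c by (simp add: m_assoc)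
  also have "\<dots> = \<zero>" using c yx by simp
  finally show ?thesis using red_sq[OF Rr Rred, of "x \<otimes> r \<otimes> y"] c by simp
qed

lemma red_sq2: "x \<in> carrier R \<Longrightarrow> y \<in> carrier R \<Longrightarrow> x \<otimes> y \<otimes> y = \<zero> \<Longrightarrow> x \<otimes> y = \<zero>"
proof -
  assume c: "x \<in> carrier R" "y \<in> carrier R" and e: "x \<otimes> y \<otimes> y = \<zero>"
  have "y \<otimes> (x \<otimes> y) = \<zero>" using red_comm[of "x \<otimes> y" y] c e by simp
  hence "(x \<otimes> y) \<otimes> (x \<otimes> y) = \<zero>" using c by (simp add: m_assoc)
  thus ?thesis using red_sq[OF Rr Rred, of "x \<otimes> y"] c by simp
qed

lemma red_series:
  fixes a b :: "nat \<Rightarrow> 'a"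
  assumes a: "\<And>i. a i \<in> carrier R" and b: "\<And>i. b i \<in> carrier R"
    and s: "\<And>k. (\<Oplus>i\<in>{..k}. a i \<otimes> b (k - i)) = \<zero>"
  shows "a i \<otimes> b j = \<zero>"
proof -
  have main: "\<forall>i j. i + j = k \<longrightarrow> a i \<otimes> b j = \<zero>" for k
  proof (induction k rule: less_induct)
    case (less k)
    note outer = less.IH
    have "t \<le> k \<longrightarrow> a (k - t) \<otimes> b t = \<zero>" for t
    proof (induction t rule: less_induct)
      case (less t)
      show ?case
      proof
        assume tk: "t \<le> k"
        have "\<zero> = (\<Oplus>i\<in>{..k}. a i \<otimes> b (k - i)) \<otimes> b t" using s b by simp
        also have "\<dots> = (\<Oplus>i\<in>{..k}. a i \<otimes> b (k - i) \<otimes> b t)"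
          using finsum_ldistr[of "{..k}" "b t" "\<lambda>i. a i \<otimes> b (k - i)"] a b by simp
        also have "\<dots> = (\<Oplus>i\<in>{..k}. if k - t = i then a i \<otimes> b (k - i) \<otimes> b t else \<zero>)"
        proof (rule finsum_cong')
          fix i assume i: "i \<in> {..k}"
          show "a i \<otimes> b (k - i) \<otimes> b t = (if k - t = i then a i \<otimes> b (k - i) \<otimes> b t else \<zero>)"
          proof (cases "k - t = i")
            case False
            show ?thesis
            proof (cases "k - i < t")
              case True
              then have "a (k - (k - i)) \<otimes> b (k - i) = \<zero>" using less.IH[of "k - i"] tk by simp
              then have "a i \<otimes> b (k - i) = \<zero>" using i by simp
              then show ?thesis using False a b by simp
            next
              case f2: False
              then have "i + t < k" using False i tk by auto
              then have "a i \<otimes> b t = \<zero>" using outer[of "i + t"] by blast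
              then have "a i \<otimes> b (k - i) \<otimes> b t = \<zero>" using red_mid[of "a i" "b t" "b (k - i)"] a b by simp
              then show ?thesis using False by simp
            qed
          qed simp
        qed (use a b in auto)
        also have "\<dots> = a (k - t) \<otimes> b (k - (k - t)) \<otimes> b t"
          by (rule finsum_singleton) (use a b in auto)
        also have "\<dots> = a (k - t) \<otimes> b t \<otimes> b t" using tk by simp
        finally show "a (k - t) \<otimes> b t = \<zero>" using red_sq2[of "a (k - t)" "b t"] a b by simp
      qed
    qed
    note inner = this
    show ?case
    proof (intro allI impI)
      fix i j assume ij: "i + j = k"
      then have "j \<le> k" "k - j = i" by auto
      then show "a i \<otimes> b j = \<zero>" using inner[of j] by simp
    qed
  qed
  show ?thesis using main[of "i + j"] by simp
qed

end


context
  fixes R :: "('a, 'b) ring_scheme" and n :: nat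
  assumes Rr: "ring R" and npos: "0 < n"
begin

interpretation R: ring R by (rule Rr)

abbreviation "S \<equiv> const_diag_tri_ring R n"

lemma S_carrier: "A \<in> carrier S \<longleftrightarrow> (\<forall>i j. (n \<le> i \<or> n \<le> j) \<longrightarrow> A i j = \<zero>\<^bsub>R\<^esub>)
                 \<and> (\<forall>i<n. \<forall>j<n. A i j \<in> carrier R)
                 \<and> (\<forall>i<n. \<forall>j<i. A i j = \<zero>\<^bsub>R\<^esub>)
                 \<and> (\<forall>i<n. A i i = A 0 0)"
  by (simp add: const_diag_tri_ring_def)

lemma S_mult: "(A \<otimes>\<^bsub>S\<^esub> B) i j = (if i < n \<and> j < n
                        then (\<Oplus>\<^bsub>R\<^esub> k \<in> {..<n}. A i k \<otimes>\<^bsub>R\<^esub> B k j)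
                        else \<zero>\<^bsub>R\<^esub>)"
  by (simp add: const_diag_tri_ring_def)

lemma S_add: "(A \<oplus>\<^bsub>S\<^esub> B) i j = (if i < n \<and> j < n then A i j \<oplus>\<^bsub>R\<^esub> B i j else \<zero>\<^bsub>R\<^esub>)"
  by (simp add: const_diag_tri_ring_def)

lemma S_zero: "\<zero>\<^bsub>S\<^esub> = (\<lambda>i j. \<zero>\<^bsub>R\<^esub>)"
  by (simp add: const_diag_tri_ring_def)

lemma S_in: "A \<in> carrier S \<Longrightarrow> i < n \<Longrightarrow> j < n \<Longrightarrow> A i j \<in> carrier R"
  by (simp add: S_carrier)

lemma S_out: assumes "A \<in> carrier S" "n \<le> i \<or> n \<le> j" shows "A i j = \<zero>\<^bsub>R\<^esub>"
proof -
  have h: "\<forall>i j. (n \<le> i \<or> n \<le> j) \<longrightarrow> A i j = \<zero>\<^bsub>R\<^esub>"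
    using assms(1)[unfolded S_carrier] by (rule conjunct1)
  show ?thesis using h[rule_format, OF assms(2)] .
qed

lemma S_low: assumes "A \<in> carrier S" "i < n" "j < i" shows "A i j = \<zero>\<^bsub>R\<^esub>"
proof -
  have h: "\<forall>i<n. \<forall>j<i. A i j = \<zero>\<^bsub>R\<^esub>"
    using assms(1)[unfolded S_carrier] by (elim conjE)
  show ?thesis using h[rule_format, OF assms(2) assms(3)] .
qed

lemma S_diag: assumes "A \<in> carrier S" "i < n" shows "A i i = A 0 0"
proof -
  have h: "\<forall>i<n. A i i = A 0 0"
    using assms(1)[unfolded S_carrier] by (elim conjE)
  show ?thesis using h[rule_format, OF assms(2)] .
qed

lemma S_lower: assumes "A \<in> carrier S" "j < i" shows "A i j = \<zero>\<^bsub>R\<^esub>"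
proof (cases "i < n")
  case True
  show ?thesis by (rule S_low[OF assms(1) True assms(2)])
next
  case False
  then have "n \<le> i \<or> n \<le> j" by simp
  then show ?thesis using S_out[OF assms(1)] by blast
qed

lemma diag_mult: assumes A: "A \<in> carrier S" and B: "B \<in> carrier S"
  shows "(A \<otimes>\<^bsub>S\<^esub> B) 0 0 = A 0 0 \<otimes>\<^bsub>R\<^esub> B 0 0"
proof -
  have "(A \<otimes>\<^bsub>S\<^esub> B) 0 0 = (\<Oplus>\<^bsub>R\<^esub> k \<in> {..<n}. A 0 k \<otimes>\<^bsub>R\<^esub> B k 0)"
    using npos by (simp only: S_mult if_True simp_thms)
  also have "\<dots> = (\<Oplus>\<^bsub>R\<^esub> k \<in> {..<n}. if 0 = k then A 0 k \<otimes>\<^bsub>R\<^esub> B k 0 else \<zero>\<^bsub>R\<^esub>)"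
  proof (rule R.finsum_cong')
    show "{..<n} = {..<n}" by (rule refl)
  next
    show "(\<lambda>k. if 0 = k then A 0 k \<otimes>\<^bsub>R\<^esub> B k 0 else \<zero>\<^bsub>R\<^esub>) \<in> {..<n} \<rightarrow> carrier R"
    proof
      fix k assume "k \<in> {..<n}"
      then have "k < n" by simp
      then show "(if 0 = k then A 0 k \<otimes>\<^bsub>R\<^esub> B k 0 else \<zero>\<^bsub>R\<^esub>) \<in> carrier R"
        using S_in[OF A npos] S_in[OF B _ npos] by simp
    qed
  next
    fix k assume "k \<in> {..<n}"
    then have k: "k < n" by simp
    show "A 0 k \<otimes>\<^bsub>R\<^esub> B k 0 = (if 0 = k then A 0 k \<otimes>\<^bsub>R\<^esub> B k 0 else \<zero>\<^bsub>R\<^esub>)"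
    proof (cases "k = 0")
      case False
      then have "B k 0 = \<zero>\<^bsub>R\<^esub>" using S_lower[OF B] by simp
      then show ?thesis using False S_in[OF A npos k] by simp
    qed simp
  qed
  also have "\<dots> = A 0 0 \<otimes>\<^bsub>R\<^esub> B 0 0"
  proof (rule R.finsum_singleton)
    show "0 \<in> {..<n}" using npos by simp
    show "finite {..<n::nat}" by simp
    show "(\<lambda>k. A 0 k \<otimes>\<^bsub>R\<^esub> B k 0) \<in> {..<n} \<rightarrow> carrier R"
      using S_in[OF A npos] S_in[OF B _ npos] by (simp add: Pi_def)
  qed
  finally show ?thesis .
qed

lemma diag_finsum:
  assumes rS: "ring S" and fin: "finite I" and Y: "\<And>i. i \<in> I \<Longrightarrow> Y i \<in> carrier S"
  shows "finsum S Y I 0 0 = finsum R (\<lambda>i. Y i 0 0) I"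
proof -
  interpret S: ring S by (rule rS)
  show ?thesis
  using fin Y
proof (induction I rule: finite_induct)
  case empty
  then show ?case
    by (simp add: S_zero)
next
  case (insert x F)
  have YF: "Y \<in> F \<rightarrow> carrier S" using insert.prems by blast
  have Yx: "Y x \<in> carrier S" using insert.prems by blast
  have YF': "(\<lambda>i. Y i 0 0) \<in> F \<rightarrow> carrier R" using YF S_in npos by blast
  have Yx': "Y x 0 0 \<in> carrier R" using Yx S_in npos by blast
  have e1: "finsum S Y (insert x F) = Y x \<oplus>\<^bsub>S\<^esub> finsum S Y F"
    by (rule S.finsum_insert[OF insert.hyps YF Yx])
  have e2: "(\<Oplus>\<^bsub>R\<^esub> i\<in>insert x F. Y i 0 0) = Y x 0 0 \<oplus>\<^bsub>R\<^esub> (\<Oplus>\<^bsub>R\<^esub> i\<in>F. Y i 0 0)"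
    by (rule R.finsum_insert[OF insert.hyps YF' Yx'])
  have ih: "finsum S Y F 0 0 = (\<Oplus>\<^bsub>R\<^esub> i\<in>F. Y i 0 0)"
    using insert.IH insert.prems by blast
  show ?case unfolding e1 e2 using npos ih by (simp only: S_add if_True simp_thms)
qed
qed

definition N :: "nat \<Rightarrow> (nat \<Rightarrow> nat \<Rightarrow> 'a) set" where
  "N k = {A \<in> carrier S. \<forall>i j. j < i + k \<longrightarrow> A i j = \<zero>\<^bsub>R\<^esub>}"

lemma N_I: "A \<in> carrier S \<Longrightarrow> (\<And>i j. j < i + k \<Longrightarrow> A i j = \<zero>\<^bsub>R\<^esub>) \<Longrightarrow> A \<in> N k"
  unfolding N_def by blast

lemma N_D: "A \<in> N k \<Longrightarrow> A \<in> carrier S"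
  "A \<in> N k \<Longrightarrow> j < i + k \<Longrightarrow> A i j = \<zero>\<^bsub>R\<^esub>"
  unfolding N_def by blast+

lemma finsum_zero_R: "(\<And>l. l < n \<Longrightarrow> f l = \<zero>\<^bsub>R\<^esub>) \<Longrightarrow> (\<Oplus>\<^bsub>R\<^esub> l\<in>{..<n}. f l) = \<zero>\<^bsub>R\<^esub>"
proof -
  assume h: "\<And>l. l < n \<Longrightarrow> f l = \<zero>\<^bsub>R\<^esub>"
  have "(\<Oplus>\<^bsub>R\<^esub> l\<in>{..<n}. f l) = (\<Oplus>\<^bsub>R\<^esub> l\<in>{..<n}. \<zero>\<^bsub>R\<^esub>)"
  proof (rule R.finsum_cong')
    show "(\<lambda>l. \<zero>\<^bsub>R\<^esub>) \<in> {..<n} \<rightarrow> carrier R" by blast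
  next
    fix l assume "l \<in> {..<n}" then show "f l = \<zero>\<^bsub>R\<^esub>" using h by simp
  qed (rule refl)
  also have "\<dots> = \<zero>\<^bsub>R\<^esub>" by (rule R.finsum_zero)
  finally show ?thesis .
qed

lemma N_mult:
  assumes rS: "ring S" and x: "x \<in> carrier S" and y: "y \<in> carrier S"
    and hx: "\<And>i j. j < i + k \<Longrightarrow> x i j = \<zero>\<^bsub>R\<^esub>"
    and hy: "\<And>i j. j < i + m \<Longrightarrow> y i j = \<zero>\<^bsub>R\<^esub>"
  shows "x \<otimes>\<^bsub>S\<^esub> y \<in> N (k + m)"
proof (rule N_I)
  interpret S: ring S by (rule rS)
  show "x \<otimes>\<^bsub>S\<^esub> y \<in> carrier S" using x y by (rule S.m_closed)
  fix i j assume that: "j < i + (k + m)"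
  show "(x \<otimes>\<^bsub>S\<^esub> y) i j = \<zero>\<^bsub>R\<^esub>"
  proof (cases "i < n \<and> j < n")
    case ij: True
    have "(\<Oplus>\<^bsub>R\<^esub> l\<in>{..<n}. x i l \<otimes>\<^bsub>R\<^esub> y l j) = \<zero>\<^bsub>R\<^esub>"
    proof (rule finsum_zero_R)
      fix l assume l: "l < n"
      have xc: "x i l \<in> carrier R" using S_in[OF x _ l] ij by blast
      have yc: "y l j \<in> carrier R" using S_in[OF y l] ij by blast
      show "x i l \<otimes>\<^bsub>R\<^esub> y l j = \<zero>\<^bsub>R\<^esub>"
      proof (cases "l < i + k")
        case True then have "x i l = \<zero>\<^bsub>R\<^esub>" by (rule hx)
        then show ?thesis using yc by simp
      next
        case False then have "j < l + m" using that by linarith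
        then have "y l j = \<zero>\<^bsub>R\<^esub>" by (rule hy)
        then show ?thesis using xc by simp
      qed
    qed
    then show ?thesis using ij by (simp only: S_mult if_True simp_thms)
  next
    case False
    then show ?thesis by (simp only: S_mult if_False)
  qed
qed

lemma N_ideal: assumes rS: "ring S" shows "ideal (N k) S"
proof -
  interpret S: ring S by (rule rS)
  have sub: "N k \<subseteq> carrier S" using N_D(1) by blast
  have lc: "x \<otimes>\<^bsub>S\<^esub> a \<in> N k" if a: "a \<in> N k" and x: "x \<in> carrier S" for a x
  proof -
    have "x \<otimes>\<^bsub>S\<^esub> a \<in> N (0 + k)"
    proof (rule N_mult[OF rS x N_D(1)[OF a]])
      fix i j :: nat assume "j < i + 0" then show "x i j = \<zero>\<^bsub>R\<^esub>" using S_lower[OF x] by simp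
    next
      fix i j :: nat assume "j < i + k" then show "a i j = \<zero>\<^bsub>R\<^esub>" by (rule N_D(2)[OF a])
    qed
    then show ?thesis by simp
  qed
  have rc: "a \<otimes>\<^bsub>S\<^esub> x \<in> N k" if a: "a \<in> N k" and x: "x \<in> carrier S" for a x
  proof -
    have "a \<otimes>\<^bsub>S\<^esub> x \<in> N (k + 0)"
    proof (rule N_mult[OF rS N_D(1)[OF a] x])
      fix i j :: nat assume "j < i + 0" then show "x i j = \<zero>\<^bsub>R\<^esub>" using S_lower[OF x] by simp
    next
      fix i j :: nat assume "j < i + k" then show "a i j = \<zero>\<^bsub>R\<^esub>" by (rule N_D(2)[OF a])
    qed
    then show ?thesis by simp
  qed
  have zero: "\<zero>\<^bsub>S\<^esub> \<in> N k"
  proof (rule N_I)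
    show "\<zero>\<^bsub>S\<^esub> \<in> carrier S" by (rule S.zero_closed)
    fix i j show "\<zero>\<^bsub>S\<^esub> i j = \<zero>\<^bsub>R\<^esub>" by (simp only: S_zero)
  qed
  have add: "a \<oplus>\<^bsub>S\<^esub> b \<in> N k" if a: "a \<in> N k" and b: "b \<in> N k" for a b
  proof (rule N_I)
    show "a \<oplus>\<^bsub>S\<^esub> b \<in> carrier S" by (rule S.a_closed[OF N_D(1)[OF a] N_D(1)[OF b]])
    fix i j assume h: "j < i + k"
    show "(a \<oplus>\<^bsub>S\<^esub> b) i j = \<zero>\<^bsub>R\<^esub>"
      using N_D(2)[OF a h] N_D(2)[OF b h] by (simp add: S_add)
  qed
  have neg: "\<ominus>\<^bsub>S\<^esub> a \<in> N k" if a: "a \<in> N k" for a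
  proof -
    have ac: "a \<in> carrier S" by (rule N_D(1)[OF a])
    have "\<ominus>\<^bsub>S\<^esub> a = \<ominus>\<^bsub>S\<^esub> (\<one>\<^bsub>S\<^esub> \<otimes>\<^bsub>S\<^esub> a)" using ac by simp
    also have "\<dots> = (\<ominus>\<^bsub>S\<^esub> \<one>\<^bsub>S\<^esub>) \<otimes>\<^bsub>S\<^esub> a" using ac by (simp add: S.l_minus)
    finally show ?thesis using lc[OF a, of "\<ominus>\<^bsub>S\<^esub> \<one>\<^bsub>S\<^esub>"] by simp
  qed
  show ?thesis
  proof (rule idealI[OF rS])
    show "subgroup (N k) (add_monoid S)"
    proof (rule S.add.subgroupI)
      show "N k \<subseteq> carrier S" by (rule sub)
      show "N k \<noteq> {}" using zero by blast
    next
      fix a assume "a \<in> N k"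
      then show "\<ominus>\<^bsub>S\<^esub> a \<in> N k" by (rule neg)
    next
      fix a b assume "a \<in> N k" "b \<in> N k"
      then show "a \<oplus>\<^bsub>S\<^esub> b \<in> N k" by (rule add)
    qed
  next
    fix a x assume "a \<in> N k" "x \<in> carrier S" then show "x \<otimes>\<^bsub>S\<^esub> a \<in> N k" by (rule lc)
  next
    fix a x assume "a \<in> N k" "x \<in> carrier S" then show "a \<otimes>\<^bsub>S\<^esub> x \<in> N k" by (rule rc)
  qed
qed

end


context
  fixes R :: "('a, 'b) ring_scheme" and n :: nat
  assumes Rr: "ring R" and npos: "0 < n"
begin

interpretation R: ring R by (rule Rr)

lemma diag_mult_i: assumes A: "A \<in> carrier (const_diag_tri_ring R n)" and B: "B \<in> carrier (const_diag_tri_ring R n)"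
  and i: "i < n"
  shows "(A \<otimes>\<^bsub>const_diag_tri_ring R n\<^esub> B) i i = A i i \<otimes>\<^bsub>R\<^esub> B i i"
proof -
  have "(A \<otimes>\<^bsub>const_diag_tri_ring R n\<^esub> B) i i = (\<Oplus>\<^bsub>R\<^esub> k \<in> {..<n}. A i k \<otimes>\<^bsub>R\<^esub> B k i)"
    using i by (simp only: S_mult[OF Rr npos] if_True simp_thms)
  also have "\<dots> = (\<Oplus>\<^bsub>R\<^esub> k \<in> {..<n}. if i = k then A i k \<otimes>\<^bsub>R\<^esub> B k i else \<zero>\<^bsub>R\<^esub>)"
  proof (rule R.finsum_cong')
    show "{..<n} = {..<n}" by (rule refl)
  next
    show "(\<lambda>k. if i = k then A i k \<otimes>\<^bsub>R\<^esub> B k i else \<zero>\<^bsub>R\<^esub>) \<in> {..<n} \<rightarrow> carrier R"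
    proof
      fix k assume "k \<in> {..<n}"
      then have "k < n" by simp
      then have "A i k \<otimes>\<^bsub>R\<^esub> B k i \<in> carrier R"
        using S_in[OF Rr npos A i] S_in[OF Rr npos B _ i] by blast
      then show "(if i = k then A i k \<otimes>\<^bsub>R\<^esub> B k i else \<zero>\<^bsub>R\<^esub>) \<in> carrier R"
        by (cases "i = k") (simp_all only: if_True if_False R.zero_closed simp_thms)
    qed
  next
    fix k assume "k \<in> {..<n}"
    then have k: "k < n" by simp
    show "A i k \<otimes>\<^bsub>R\<^esub> B k i = (if i = k then A i k \<otimes>\<^bsub>R\<^esub> B k i else \<zero>\<^bsub>R\<^esub>)"
    proof (cases "i = k")
      case False
      show ?thesis
      proof (cases "k < i")
        case True
        then have "A i k = \<zero>\<^bsub>R\<^esub>" using S_lower[OF Rr npos A] by simp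
        then show ?thesis using False S_in[OF Rr npos B k i] by simp
      next
        case f2: False
        then have "i < k" using False by simp
        then have "B k i = \<zero>\<^bsub>R\<^esub>" using S_lower[OF Rr npos B] by simp
        then show ?thesis using False S_in[OF Rr npos A i k] by simp
      qed
    qed simp
  qed
  also have "\<dots> = A i i \<otimes>\<^bsub>R\<^esub> B i i"
  proof (rule R.finsum_singleton)
    show "i \<in> {..<n}" using i by simp
    show "finite {..<n::nat}" by simp
    show "(\<lambda>k. A i k \<otimes>\<^bsub>R\<^esub> B k i) \<in> {..<n} \<rightarrow> carrier R"
      using S_in[OF Rr npos A i] S_in[OF Rr npos B _ i] by (simp add: Pi_def)
  qed
  finally show ?thesis .
qed

lemma S_mult_closed: assumes A: "A \<in> carrier (const_diag_tri_ring R n)" and B: "B \<in> carrier (const_diag_tri_ring R n)"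
  shows "A \<otimes>\<^bsub>const_diag_tri_ring R n\<^esub> B \<in> carrier (const_diag_tri_ring R n)"
proof -
  let ?C = "A \<otimes>\<^bsub>const_diag_tri_ring R n\<^esub> B"
  have c1: "\<forall>i j. (n \<le> i \<or> n \<le> j) \<longrightarrow> ?C i j = \<zero>\<^bsub>R\<^esub>"
    by (auto simp add: S_mult[OF Rr npos])
  have c2: "\<forall>i<n. \<forall>j<n. ?C i j \<in> carrier R"
  proof (intro allI impI)
    fix i j assume i: "i < n" and j: "j < n"
    have "(\<Oplus>\<^bsub>R\<^esub> k \<in> {..<n}. A i k \<otimes>\<^bsub>R\<^esub> B k j) \<in> carrier R"
      by (rule R.finsum_closed) (use S_in[OF Rr npos A i] S_in[OF Rr npos B _ j] in \<open>simp add: Pi_def\<close>)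
    then show "?C i j \<in> carrier R" using i j by (simp only: S_mult[OF Rr npos] if_True simp_thms)
  qed
  have c3: "\<forall>i<n. \<forall>j<i. ?C i j = \<zero>\<^bsub>R\<^esub>"
  proof (intro allI impI)
    fix i j assume i: "i < n" and j: "j < i"
    have "(\<Oplus>\<^bsub>R\<^esub> k \<in> {..<n}. A i k \<otimes>\<^bsub>R\<^esub> B k j) = \<zero>\<^bsub>R\<^esub>"
    proof (rule finsum_zero_R[OF Rr npos])
      fix l assume l: "l < n"
      show "A i l \<otimes>\<^bsub>R\<^esub> B l j = \<zero>\<^bsub>R\<^esub>"
      proof (cases "l < i")
        case True then have "A i l = \<zero>\<^bsub>R\<^esub>" using S_lower[OF Rr npos A] by simp
        then show ?thesis using S_in[OF Rr npos B l] j i by simp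
      next
        case False then have "B l j = \<zero>\<^bsub>R\<^esub>" using S_lower[OF Rr npos B] j by simp
        then show ?thesis using S_in[OF Rr npos A i l] by simp
      qed
    qed
    then show "?C i j = \<zero>\<^bsub>R\<^esub>" using i j by (simp only: S_mult[OF Rr npos] if_True simp_thms) simp
  qed
  have c4: "\<forall>i<n. ?C i i = ?C 0 0"
  proof (intro allI impI)
    fix i assume i: "i < n"
    show "?C i i = ?C 0 0"
      using diag_mult_i[OF A B i] diag_mult_i[OF A B npos] S_diag[OF Rr npos A i] S_diag[OF Rr npos B i]
      by simp
  qed
  show ?thesis unfolding S_carrier[OF Rr npos] using c1 c2 c3 c4 by blast
qed

end


theorem proposition2p2:
  fixes R :: "('a, 'b) ring_scheme" and n :: nat
  assumes "ring R" and "reduced_ring R" and "1 \<le> n"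
  shows "almost_armendariz (const_diag_tri_ring R n)"
proof -
  have Rr: "ring R" by fact
  have Rred: "reduced_ring R" by fact
  have npos: "0 < n" using assms(3) by simp
  interpret R: ring R by (rule Rr)
  let ?S = "const_diag_tri_ring R n"
  show ?thesis unfolding almost_armendariz_def
  proof (intro ballI impI allI)
    fix f g i j
    assume f: "f \<in> carrier (UP ?S)" and g: "g \<in> carrier (UP ?S)"
      and fg: "f \<otimes>\<^bsub>UP ?S\<^esub> g = \<zero>\<^bsub>UP ?S\<^esub>"
    have cf: "\<And>k. coeff (UP ?S) f k \<in> carrier ?S" using f by (simp add: UP_def up_def Pi_def)
    have cg: "\<And>k. coeff (UP ?S) g k \<in> carrier ?S" using g by (simp add: UP_def up_def Pi_def)
    let ?X = "coeff (UP ?S) f i \<otimes>\<^bsub>?S\<^esub> coeff (UP ?S) g j"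
    have Xc: "?X \<in> carrier ?S" by (rule S_mult_closed[OF Rr npos cf cg])
    show "?X \<in> prime_radical ?S"
      unfolding prime_radical_def
    proof (intro CollectI conjI allI impI)
      show "?X \<in> carrier ?S" by (rule Xc)
      fix P assume P: "nc_prime_ideal P ?S"
      then have IP: "ideal P ?S" unfolding nc_prime_ideal_def by blast
      have prime: "\<And>A B. ideal A ?S \<Longrightarrow> ideal B ?S \<Longrightarrow>
          (\<forall>a\<in>A. \<forall>b\<in>B. a \<otimes>\<^bsub>?S\<^esub> b \<in> P) \<Longrightarrow> A \<subseteq> P \<or> B \<subseteq> P"
        using P unfolding nc_prime_ideal_def by blast
      have rS: "ring ?S" using IP unfolding ideal_def by blast
      interpret S: ring ?S by (rule rS)
      interpret IP: ideal P ?S by (rule IP)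
      interpret U: UP_ring ?S "UP ?S" by (simp add: UP_ring_def rS)
      define a where "a = (\<lambda>k. coeff (UP ?S) f k 0 0)"
      define b where "b = (\<lambda>k. coeff (UP ?S) g k 0 0)"
      have ac: "\<And>k. a k \<in> carrier R" unfolding a_def using S_in[OF Rr npos cf npos npos] .
      have bc: "\<And>k. b k \<in> carrier R" unfolding b_def using S_in[OF Rr npos cg npos npos] .
      have ser: "(\<Oplus>\<^bsub>R\<^esub> i\<in>{..k}. a i \<otimes>\<^bsub>R\<^esub> b (k - i)) = \<zero>\<^bsub>R\<^esub>" for k
      proof -
        have "coeff (UP ?S) (f \<otimes>\<^bsub>UP ?S\<^esub> g) k = \<zero>\<^bsub>?S\<^esub>" using fg by simp
        then have e: "finsum ?S (\<lambda>i. coeff (UP ?S) f i \<otimes>\<^bsub>?S\<^esub> coeff (UP ?S) g (k - i)) {..k} = \<zero>\<^bsub>?S\<^esub>"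
          using U.coeff_mult[OF f g] by simp
        have "finsum ?S (\<lambda>i. coeff (UP ?S) f i \<otimes>\<^bsub>?S\<^esub> coeff (UP ?S) g (k - i)) {..k} 0 0
            = finsum R (\<lambda>i. (coeff (UP ?S) f i \<otimes>\<^bsub>?S\<^esub> coeff (UP ?S) g (k - i)) 0 0) {..k}"
          by (rule diag_finsum[OF Rr npos rS]) (auto intro: S.m_closed cf cg)
        also have "\<dots> = (\<Oplus>\<^bsub>R\<^esub> i\<in>{..k}. a i \<otimes>\<^bsub>R\<^esub> b (k - i))"
        proof (rule R.finsum_cong')
          show "{..k} = {..k}" by (rule refl)
          show "(\<lambda>i. a i \<otimes>\<^bsub>R\<^esub> b (k - i)) \<in> {..k} \<rightarrow> carrier R" using ac bc by blast
        next
          fix i assume "i \<in> {..k}"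
          show "(coeff (UP ?S) f i \<otimes>\<^bsub>?S\<^esub> coeff (UP ?S) g (k - i)) 0 0 = a i \<otimes>\<^bsub>R\<^esub> b (k - i)"
            unfolding a_def b_def by (rule diag_mult[OF Rr npos cf cg])
        qed
        finally show ?thesis using e by (simp add: S_zero[OF Rr npos])
      qed
      have X00: "?X 0 0 = \<zero>\<^bsub>R\<^esub>"
        using diag_mult[OF Rr npos cf cg] red_series[OF Rr Rred ac bc ser, of i j]
        unfolding a_def b_def by simp
      have XN: "?X \<in> N R n 1"
      proof (rule N_I[OF Rr npos Xc])
        fix i' j' :: nat assume h: "j' < i' + 1"
        show "?X i' j' = \<zero>\<^bsub>R\<^esub>"
        proof (cases "j' < i'")
          case True then show ?thesis by (rule S_lower[OF Rr npos Xc])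
        next
          case False
          then have ij: "j' = i'" using h by simp
          show ?thesis
          proof (cases "i' < n")
            case True then show ?thesis using S_diag[OF Rr npos Xc True] X00 ij by simp
          next
            case False then show ?thesis using S_out[OF Rr npos Xc] ij by simp
          qed
        qed
      qed
      have Nn: "N R n n \<subseteq> P"
      proof
        fix A assume A: "A \<in> N R n n"
        have Ac: "A \<in> carrier ?S" by (rule N_D(1)[OF Rr npos A])
        have "A = \<zero>\<^bsub>?S\<^esub>"
        proof (intro ext)
          fix i' j' :: nat
          show "A i' j' = \<zero>\<^bsub>?S\<^esub> i' j'"
          proof (cases "i' < n \<and> j' < n")
            case True
            then have "j' < i' + n" by simp
            then show ?thesis using N_D(2)[OF Rr npos A] by (simp add: S_zero[OF Rr npos])
          next
            case False
            then show ?thesis using S_out[OF Rr npos Ac] by (simp add: S_zero[OF Rr npos] not_less)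
          qed
        qed
        then show "A \<in> P" using IP.zero_closed by simp
      qed
      have chain: "d < n \<longrightarrow> N R n (n - d) \<subseteq> P" for d
      proof (induction d)
        case 0 then show ?case using Nn by simp
      next
        case (Suc d)
        show ?case
        proof
          assume dn: "Suc d < n"
          let ?k = "n - Suc d"
          have k1: "1 \<le> ?k" using dn by simp
          have prev: "N R n (n - d) \<subseteq> P" using Suc.IH dn by simp
          have kk: "?k + 1 = n - d" using dn by simp
          have prod: "\<forall>a\<in>N R n ?k. \<forall>b\<in>N R n 1. a \<otimes>\<^bsub>?S\<^esub> b \<in> P"
          proof (intro ballI)
            fix a b assume a: "a \<in> N R n ?k" and b: "b \<in> N R n 1"
            have "a \<otimes>\<^bsub>?S\<^esub> b \<in> N R n (?k + 1)"
              by (rule N_mult[OF Rr npos rS N_D(1)[OF Rr npos a] N_D(1)[OF Rr npos b]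
                    N_D(2)[OF Rr npos a] N_D(2)[OF Rr npos b]])
            then show "a \<otimes>\<^bsub>?S\<^esub> b \<in> P" using prev kk by auto
          qed
          have sub1: "N R n ?k \<subseteq> N R n 1"
          proof
            fix A assume A: "A \<in> N R n ?k"
            show "A \<in> N R n 1"
            proof (rule N_I[OF Rr npos N_D(1)[OF Rr npos A]])
              fix i' j' :: nat assume "j' < i' + 1"
              then have "j' < i' + ?k" using k1 by linarith
              then show "A i' j' = \<zero>\<^bsub>R\<^esub>" by (rule N_D(2)[OF Rr npos A])
            qed
          qed
          from prime[OF N_ideal[OF Rr npos rS] N_ideal[OF Rr npos rS] prod]
          show "N R n ?k \<subseteq> P" using sub1 by blast
        qed
      qed
      have "N R n 1 \<subseteq> P" using chain[of "n - 1"] npos by simp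
      then show "?X \<in> P" using XN by blast
    qed
  qed
qed


end
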